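(* Let $b\ge2$, $d\ge1$, $\Lambda_b=\{0,1,\dots,b-1\}^d$, and let $T$ be a supercritical Galton–Watson tree with alphabet $\Lambda_b$ and binomial offspring distribution with parameter $p$. For $k\ge2$ let $\mathscr{D}_{b,k}=\{X\subseteq(\Lambda_b)^k:\exists a\in(\Lambda_b)^{k-2},\ a(\Lambda_b)^2\subseteq X\}$ and $g_{\mathscr{D}_{b,k}}(s)=\mathbb{P}(T_k^{(s)}\notin\mathscr{D}_{b,k})$. Then for every $s\in(0,1)$, $g_{\mathscr{D}_{b,k}}(s)\to\mathbb{P}(\text{extinction})$ as $k\to\infty$.
   Context: The Galton–Watson tree with offspring distribution $W$, where $\mathbb{P}(W=B)=p^{|B|}(1-p)^{|\Lambda_b\setminus B|}$ for $B\subseteq\Lambda_b$, is $T_0=\{\emptyset\}$, $T_n=\{aj:a\in T_{n-1},j\in W_a\}$ with independent copies $W_a$; supercritical means $pb^d>1$; extinction means $T_n=\emptyset$ for some $n$. $a(\Lambda_b)^2=\{aj:j\in(\Lambda_b)^2\}$. $T_k^{(s)}=T_k\cap Y$ with $Y\subseteq(\Lambda_b)^k$ independent of $T$, $\mathbb{P}(Y=B)=(1-s)^{|B|}s^{|(\Lambda_b)^k\setminus B|}$. *)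

theory Defs
  imports "HOL-Probability.Probability"
begin

definition alphabet :: "nat \<Rightarrow> nat \<Rightarrow> nat list set" where
  "alphabet b d = {x. length x = d \<and> set x \<subseteq> {..<b}}"

definition words :: "nat \<Rightarrow> nat \<Rightarrow> nat \<Rightarrow> nat list list set" where
  "words b d k = {w. length w = k \<and> set w \<subseteq> alphabet b d}"

text \<open>Probability space of the tree: an independent Bernoulli(p) coin for every word a j,
  so that W_a = {j in Lambda_b. coin (a @ [j])} are independent copies of W with
  P(W = B) = p^|B| (1-p)^|Lambda_b - B|.\<close>
definition gw_space :: "real \<Rightarrow> (nat list list \<Rightarrow> bool) measure" where
  "gw_space p = PiM UNIV (\<lambda>_. measure_pmf (bernoulli_pmf p))"

fun gw_gen :: "nat \<Rightarrow> nat \<Rightarrow> (nat list list \<Rightarrow> bool) \<Rightarrow> nat \<Rightarrow> nat list list set" where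
  "gw_gen b d \<omega> 0 = {[]}"
| "gw_gen b d \<omega> (Suc n) =
     {a @ [j] | a j. a \<in> gw_gen b d \<omega> n \<and> j \<in> alphabet b d \<and> \<omega> (a @ [j])}"

definition extinction_prob :: "nat \<Rightarrow> nat \<Rightarrow> real \<Rightarrow> real" where
  "extinction_prob b d p = measure (gw_space p) {\<omega>. \<exists>n. gw_gen b d \<omega> n = {}}"

text \<open>Random subset Y of (Lambda_b)^k, independent of T: each word kept independently
  with probability 1-s, so P(Y = B) = (1-s)^|B| s^|(Lambda_b)^k - B|.\<close>
definition Y_space :: "real \<Rightarrow> (nat list list \<Rightarrow> bool) measure" where
  "Y_space s = PiM UNIV (\<lambda>_. measure_pmf (bernoulli_pmf (1 - s)))"

definition Yset :: "nat \<Rightarrow> nat \<Rightarrow> nat \<Rightarrow> (nat list list \<Rightarrow> bool) \<Rightarrow> nat list list set" where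
  "Yset b d k \<eta> = {w \<in> words b d k. \<eta> w}"

definition Dfam :: "nat \<Rightarrow> nat \<Rightarrow> nat \<Rightarrow> nat list list set set" where
  "Dfam b d k = {X. X \<subseteq> words b d k \<and>
      (\<exists>a \<in> words b d (k - 2). {a @ v | v. v \<in> words b d 2} \<subseteq> X)}"

definition gD :: "nat \<Rightarrow> nat \<Rightarrow> real \<Rightarrow> nat \<Rightarrow> real \<Rightarrow> real" where
  "gD b d p k s = measure (gw_space p \<Otimes>\<^sub>M Y_space s)
      {(\<omega>, \<eta>). gw_gen b d \<omega> k \<inter> Yset b d k \<eta> \<notin> Dfam b d k}"

end

theory Submission
  imports Defs
begin


definition BS :: "real \<Rightarrow> ('a list \<Rightarrow> bool) measure" where
  "BS q = PiM UNIV (\<lambda>_. measure_pmf (bernoulli_pmf q))"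

definition sh :: "'a \<Rightarrow> ('a list \<Rightarrow> 'b) \<Rightarrow> ('a list \<Rightarrow> 'b)" where
  "sh j \<omega> = (\<lambda>w. \<omega> (j # w))"

lemma space_BS[simp]: "space (BS q) = UNIV"
  by (simp add: BS_def space_PiM)

lemma prob_space_BS: "prob_space (BS q)"
  unfolding BS_def by (intro prob_space_PiM) (simp add: prob_space_measure_pmf)

lemma sh_measurable[measurable]: "sh j \<in> measurable (BS q) (BS q)"
  unfolding BS_def sh_def
  by (intro measurable_PiM_single') (auto simp: space_PiM)

lemma t1: "(\<lambda>\<omega>. \<omega> i) \<in> measurable (BS q) (measure_pmf (bernoulli_pmf q))"
  unfolding BS_def by (rule measurable_component_singleton) simp

lemma comp_measurable[measurable]: "(\<lambda>\<omega>. \<omega> w) \<in> measurable (BS q) (count_space UNIV)"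
proof -
  have "measurable (BS q) (measure_pmf (bernoulli_pmf q)) = measurable (BS q) (count_space UNIV)"
    by (rule measurable_cong_sets) auto
  then show ?thesis using t1[of w q] by simp
qed

lemma coord_sets: "{w. w i} \<in> sets (BS q)" "{w. \<not> w i} \<in> sets (BS q)"
proof -
  have "Measurable.pred (BS q) (\<lambda>w. w i)" by measurable
  then show "{w. w i} \<in> sets (BS q)" by (simp add: pred_def)
  have "Measurable.pred (BS q) (\<lambda>w. \<not> w i)" by measurable
  then show "{w. \<not> w i} \<in> sets (BS q)" by (simp add: pred_def)
qed

lemma distr_sh: "distr (BS q) (BS q) (sh j) = BS q"
proof -
  have "distr (BS q) (PiM UNIV (\<lambda>i. measure_pmf (bernoulli_pmf q))) (\<lambda>\<omega>. \<lambda>n\<in>UNIV. \<omega> (j # n))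
        = PiM UNIV (\<lambda>i. measure_pmf (bernoulli_pmf q))"
    unfolding BS_def
    by (rule distr_PiM_reindex[where f="\<lambda>n. j # n"]) (auto simp: prob_space_measure_pmf inj_on_def)
  then show ?thesis by (simp add: sh_def[abs_def] BS_def restrict_UNIV)
qed


lemma t2: "distr (BS q) (measure_pmf (bernoulli_pmf q)) (\<lambda>x. x i) = measure_pmf (bernoulli_pmf q)"
  unfolding BS_def by (rule distr_PiM_component) (simp_all add: prob_space_measure_pmf)

lemma t3: "(\<lambda>x. \<lambda>i\<in>UNIV. x i) = (\<lambda>x. x)"
  by (simp add: restrict_UNIV)

lemma t4: "distr (BS q) (Pi\<^sub>M UNIV (\<lambda>i. measure_pmf (bernoulli_pmf q))) (\<lambda>x. \<lambda>i\<in>UNIV. x i) =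
      Pi\<^sub>M UNIV (\<lambda>i. distr (BS q) (measure_pmf (bernoulli_pmf q)) (\<lambda>x. x i))"
  unfolding t2 t3 BS_def[symmetric] by (rule distr_id)

lemma indep_comp:
  "prob_space.indep_vars (BS q :: ('a list \<Rightarrow> bool) measure) (\<lambda>_. measure_pmf (bernoulli_pmf q)) (\<lambda>i \<omega>. \<omega> i) UNIV"
proof -
  have "prob_space.indep_vars (BS q :: ('a list \<Rightarrow> bool) measure) (\<lambda>_. measure_pmf (bernoulli_pmf q)) (\<lambda>i \<omega>. \<omega> i) UNIV \<longleftrightarrow>
    distr (BS q :: ('a list \<Rightarrow> bool) measure) (Pi\<^sub>M UNIV (\<lambda>i. measure_pmf (bernoulli_pmf q))) (\<lambda>x. \<lambda>i\<in>UNIV. x i) =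
      Pi\<^sub>M UNIV (\<lambda>i. distr (BS q :: ('a list \<Rightarrow> bool) measure) (measure_pmf (bernoulli_pmf q)) (\<lambda>x. x i))"
    apply (rule prob_space.indep_vars_iff_distr_eq_PiM[OF prob_space_BS])
     apply (rule UNIV_not_empty)
    apply (rule t1)
    done
  then show ?thesis using t4 by (rule iffD2)
qed


lemma indep_sh:
  "prob_space.indep_vars (BS q) (\<lambda>_. BS q) sh L"
proof -
  interpret prob_space "BS q" by (rule prob_space_BS)
  define K where "K j = range (\<lambda>w. j # w)" for j :: 'a
  have 1: "indep_vars (\<lambda>j. PiM (K j) (\<lambda>_. measure_pmf (bernoulli_pmf q)))
      (\<lambda>j \<omega>. restrict (\<lambda>i. \<omega> i) (K j)) L"
    by (rule indep_vars_restrict[OF indep_comp]) (auto simp: K_def disjoint_family_on_def)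
  have 2: "indep_vars (\<lambda>_. BS q) (\<lambda>j x. (\<lambda>r w. r (j # w)) (restrict (\<lambda>i. x i) (K j))) L"
  proof (rule indep_vars_compose2[OF 1])
    fix j assume "j \<in> L"
    show "(\<lambda>r w. r (j # w)) \<in> measurable (PiM (K j) (\<lambda>_. measure_pmf (bernoulli_pmf q))) (BS q)"
      unfolding BS_def
      apply (intro measurable_PiM_single')
      subgoal for w by (rule measurable_component_singleton) (simp add: K_def)
      by (simp add: space_PiM)
  qed
  have eq: "indep_vars (\<lambda>_. BS q) (\<lambda>j x. (\<lambda>r w. r (j # w)) (restrict (\<lambda>i. x i) (K j))) L
      \<longleftrightarrow> indep_vars (\<lambda>_. BS q) sh L"
    by (rule indep_vars_cong) (auto simp: K_def sh_def fun_eq_iff)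
  show ?thesis
    using eq 2 by (rule iffD1)
qed

lemma BI:
  fixes g :: "'a \<Rightarrow> ('a list \<Rightarrow> bool) \<Rightarrow> ennreal"
  assumes L: "finite L" and g: "\<And>j. j \<in> L \<Longrightarrow> g j \<in> borel_measurable (BS q)"
  shows "(\<integral>\<^sup>+\<omega>. (\<Prod>j\<in>L. g j (sh j \<omega>)) \<partial>BS q) = (\<Prod>j\<in>L. \<integral>\<^sup>+\<omega>. g j \<omega> \<partial>BS q)"
proof -
  interpret prob_space "BS q" by (rule prob_space_BS)
  have "indep_vars (\<lambda>_. borel) (\<lambda>j \<omega>. g j (sh j \<omega>)) L"
    by (rule indep_vars_compose2[OF indep_sh g])
  then have "(\<integral>\<^sup>+\<omega>. (\<Prod>j\<in>L. g j (sh j \<omega>)) \<partial>BS q) = (\<Prod>j\<in>L. \<integral>\<^sup>+\<omega>. g j (sh j \<omega>) \<partial>BS q)"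
    using indep_vars_nn_integral[OF L] by simp
  also have "\<dots> = (\<Prod>j\<in>L. \<integral>\<^sup>+\<omega>. g j \<omega> \<partial>BS q)"
  proof (intro prod.cong refl)
    fix j assume "j \<in> L"
    have "(\<integral>\<^sup>+\<omega>. g j \<omega> \<partial>BS q) = (\<integral>\<^sup>+\<omega>. g j \<omega> \<partial>distr (BS q) (BS q) (sh j))"
      by (simp add: distr_sh)
    also have "\<dots> = (\<integral>\<^sup>+\<omega>. g j (sh j \<omega>) \<partial>BS q)"
      using g[OF \<open>j \<in> L\<close>] by (intro nn_integral_distr sh_measurable) simp
    finally show "(\<integral>\<^sup>+\<omega>. g j (sh j \<omega>) \<partial>BS q) = (\<integral>\<^sup>+\<omega>. g j \<omega> \<partial>BS q)" by simp
  qed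
  finally show ?thesis .
qed


lemma BI_set:
  assumes L: "finite L" and C: "\<And>j. j \<in> L \<Longrightarrow> C j \<in> sets (BS q)"
  shows "emeasure (BS q) {\<eta>. \<forall>j\<in>L. sh j \<eta> \<in> C j} = (\<Prod>j\<in>L. emeasure (BS q) (C j))"
proof -
  have ind: "indicator {\<eta>. \<forall>j\<in>L. sh j \<eta> \<in> C j} \<eta> = (\<Prod>j\<in>L. indicator (C j) (sh j \<eta>) :: ennreal)" for \<eta>
  proof (cases "\<forall>j\<in>L. sh j \<eta> \<in> C j")
    case True then show ?thesis by (simp add: indicator_def)
  next
    case False
    then obtain j where "j \<in> L" "sh j \<eta> \<notin> C j" by auto
    then have "(\<Prod>j\<in>L. indicator (C j) (sh j \<eta>) :: ennreal) = 0"
      by (intro prod_zero L) (auto intro!: bexI[of _ j])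
    with False show ?thesis by simp
  qed
  have S: "{\<eta>. \<forall>j\<in>L. sh j \<eta> \<in> C j} = (\<Inter>j\<in>L. sh j -` C j) \<inter> space (BS q)"
    by auto
  have Sm: "{\<eta>. \<forall>j\<in>L. sh j \<eta> \<in> C j} \<in> sets (BS q)"
  proof (cases "L = {}")
    case True then show ?thesis using sets.top[of "BS q"] by simp
  next
    case False
    have "(\<Inter>j\<in>L. sh j -` C j \<inter> space (BS q)) \<in> sets (BS q)"
      using L False measurable_sets[OF sh_measurable C] by (intro sets.finite_INT) auto
    moreover have "(\<Inter>j\<in>L. sh j -` C j \<inter> space (BS q)) = {\<eta>. \<forall>j\<in>L. sh j \<eta> \<in> C j}"
      using False by auto
    ultimately show ?thesis by simp
  qed
  have "emeasure (BS q) {\<eta>. \<forall>j\<in>L. sh j \<eta> \<in> C j} = (\<integral>\<^sup>+\<eta>. indicator {\<eta>. \<forall>j\<in>L. sh j \<eta> \<in> C j} \<eta> \<partial>BS q)"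
    using Sm by simp
  also have "\<dots> = (\<integral>\<^sup>+\<eta>. (\<Prod>j\<in>L. indicator (C j) (sh j \<eta>)) \<partial>BS q)"
    by (simp add: ind)
  also have "\<dots> = (\<Prod>j\<in>L. \<integral>\<^sup>+\<eta>. indicator (C j) \<eta> \<partial>BS q)"
    using C by (intro BI L) auto
  also have "\<dots> = (\<Prod>j\<in>L. emeasure (BS q) (C j))"
    using C by (intro prod.cong refl) simp
  finally show ?thesis .
qed

lemma root_indep:
  fixes F :: "('a list \<Rightarrow> bool) \<Rightarrow> ennreal"
  assumes q: "0 \<le> q" "q \<le> 1" and F[measurable]: "F \<in> borel_measurable (BS q)"
    and inv: "\<And>w c. F (w(Nil := c)) = F w"
  shows "(\<integral>\<^sup>+\<omega>. indicator {\<omega>. \<omega> []} \<omega> * F \<omega> \<partial>BS q) = ennreal q * (\<integral>\<^sup>+\<omega>. F \<omega> \<partial>BS q)"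
proof -
  define N where "N = measure_pmf (bernoulli_pmf q)"
  define I where "I = (UNIV - {[]} :: 'a list set)"
  define P where "P = PiM I (\<lambda>_. N)"
  interpret N: prob_space N unfolding N_def by (rule prob_space_measure_pmf)
  interpret P: prob_space P unfolding P_def by (rule prob_space_PiM) (simp add: N_def prob_space_measure_pmf)
  have ins: "insert [] I = UNIV" by (auto simp: I_def)
  have D: "distr (N \<Otimes>\<^sub>M P) (BS q) (\<lambda>(x, X). X(Nil := x)) = BS q"
    using distr_pair_PiM_eq_PiM[of I "\<lambda>_. N" "[]"]
    by (simp add: BS_def ins N_def P_def prob_space_measure_pmf)
  have upd0: "(\<lambda>z. (snd z)([] := fst z)) \<in> measurable (N \<Otimes>\<^sub>M P) (BS q)"
    unfolding BS_def N_def[symmetric] P_def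
    by (rule measurable_fun_upd[where J=I]) (auto simp: I_def)
  have upd[measurable]: "(\<lambda>(x, X). X(Nil := x)) \<in> measurable (N \<Otimes>\<^sub>M P) (BS q)"
    using upd0 by (simp add: case_prod_unfold)
  have updF[measurable]: "(\<lambda>X. X(Nil := False)) \<in> measurable P (BS q)"
    unfolding BS_def N_def[symmetric] P_def
    by (rule measurable_fun_upd[where J=I]) (auto simp: I_def N_def intro!: measurable_const)
  have gen: "integral\<^sup>N (BS q) G = (\<integral>\<^sup>+x. \<integral>\<^sup>+X. G (X(Nil := x)) \<partial>P \<partial>N)"
    if G[measurable]: "G \<in> borel_measurable (BS q)" for G
  proof -
    have "integral\<^sup>N (BS q) G = integral\<^sup>N (distr (N \<Otimes>\<^sub>M P) (BS q) (\<lambda>(x, X). X(Nil := x))) G"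
      by (simp add: D)
    also have "\<dots> = (\<integral>\<^sup>+z. G ((\<lambda>(x, X). X(Nil := x)) z) \<partial>(N \<Otimes>\<^sub>M P))"
      by (rule nn_integral_distr) simp_all
    also have "\<dots> = (\<integral>\<^sup>+x. \<integral>\<^sup>+X. G (X(Nil := x)) \<partial>P \<partial>N)"
      using P.nn_integral_fst[symmetric, of "\<lambda>z. G ((\<lambda>(x, X). X(Nil := x)) z)" N] by simp
    finally show ?thesis .
  qed
  define F0 where "F0 X = F (X(Nil := False))" for X
  have F0m[measurable]: "F0 \<in> borel_measurable P"
    unfolding F0_def[abs_def] by measurable
  define C where "C = (\<integral>\<^sup>+X. F0 X \<partial>P)"
  have Fx: "F (X(Nil := x)) = F0 X" for X x
    using inv[of "X(Nil := x)" False] by (simp add: F0_def)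
  have pt: "indicator {\<omega>. \<omega> []} (X(Nil := x)) * F (X(Nil := x)) = indicator {True} x * F0 X" for X x
    by (simp add: Fx indicator_def)
  have "(\<integral>\<^sup>+\<omega>. indicator {\<omega>. \<omega> []} \<omega> * F \<omega> \<partial>BS q)
      = (\<integral>\<^sup>+x. \<integral>\<^sup>+X. indicator {\<omega>. \<omega> []} (X(Nil := x)) * F (X(Nil := x)) \<partial>P \<partial>N)"
    by (rule gen) measurable
  also have "\<dots> = (\<integral>\<^sup>+x. \<integral>\<^sup>+X. indicator {True} x * F0 X \<partial>P \<partial>N)"
    by (simp only: pt)
  also have "\<dots> = (\<integral>\<^sup>+x. indicator {True} x * C \<partial>N)"
    unfolding C_def by (subst nn_integral_cmult) measurable
  also have "\<dots> = (\<integral>\<^sup>+x. C * indicator {True} x \<partial>N)"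
    by (simp add: mult.commute)
  also have "\<dots> = C * ennreal q"
    by (subst nn_integral_cmult_indicator) (simp_all add: N_def emeasure_pmf_single q)
  finally have 1: "(\<integral>\<^sup>+\<omega>. indicator {\<omega>. \<omega> []} \<omega> * F \<omega> \<partial>BS q) = C * ennreal q" .
  have "(\<integral>\<^sup>+\<omega>. F \<omega> \<partial>BS q) = (\<integral>\<^sup>+x. \<integral>\<^sup>+X. F (X(Nil := x)) \<partial>P \<partial>N)"
    by (rule gen) measurable
  also have "\<dots> = (\<integral>\<^sup>+x. C \<partial>N)"
    by (simp only: Fx C_def)
  also have "\<dots> = C"
    by (simp add: N.emeasure_space_1)
  finally show ?thesis using 1 by (simp add: mult.commute)
qed


lemma REC:
  fixes L :: "'a set" and E :: "(('a list \<Rightarrow> bool) \<times> ('a list \<Rightarrow> bool)) set"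
  assumes L: "finite L" and p: "0 \<le> p" "p \<le> 1" and E[measurable]: "E \<in> sets (BS p \<Otimes>\<^sub>M BS q)"
    and inv: "\<And>w e c. ((w(Nil := c), e) \<in> E) = ((w, e) \<in> E)"
  shows "{z. \<forall>j\<in>L. fst z [j] \<longrightarrow> (sh j (fst z), sh j (snd z)) \<in> E} \<in> sets (BS p \<Otimes>\<^sub>M BS q)"
    and "emeasure (BS p \<Otimes>\<^sub>M BS q) {z. \<forall>j\<in>L. fst z [j] \<longrightarrow> (sh j (fst z), sh j (snd z)) \<in> E}
          = (ennreal (1 - p) + ennreal p * emeasure (BS p \<Otimes>\<^sub>M BS q) E) ^ card L"
proof -
  interpret P: prob_space "BS p :: ('a list \<Rightarrow> bool) measure" by (rule prob_space_BS)
  interpret Q: prob_space "BS q :: ('a list \<Rightarrow> bool) measure" by (rule prob_space_BS)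
  interpret PQ: pair_prob_space "BS p :: ('a list \<Rightarrow> bool) measure" "BS q :: ('a list \<Rightarrow> bool) measure" ..
  define E' where "E' = {z. \<forall>j\<in>L. fst z [j] \<longrightarrow> (sh j (fst z), sh j (snd z)) \<in> E}"
  have sp: "space (BS p \<Otimes>\<^sub>M BS q) = UNIV" by (simp add: space_pair_measure)
  have "Measurable.pred (BS p \<Otimes>\<^sub>M BS q) (\<lambda>z. \<forall>j\<in>L. fst z [j] \<longrightarrow> (sh j (fst z), sh j (snd z)) \<in> E)"
    using L by measurable
  then have "{z \<in> space (BS p \<Otimes>\<^sub>M BS q). \<forall>j\<in>L. fst z [j] \<longrightarrow> (sh j (fst z), sh j (snd z)) \<in> E} \<in> sets (BS p \<Otimes>\<^sub>M BS q)"
    by (simp only: pred_def)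
  then have E'm: "E' \<in> sets (BS p \<Otimes>\<^sub>M BS q)"
    unfolding E'_def sp by simp
  then show "{z. \<forall>j\<in>L. fst z [j] \<longrightarrow> (sh j (fst z), sh j (snd z)) \<in> E} \<in> sets (BS p \<Otimes>\<^sub>M BS q)"
    by (simp add: E'_def)
  define F where "F w = emeasure (BS q) (Pair w -` E)" for w
  have Fm[measurable]: "F \<in> borel_measurable (BS p)"
    unfolding F_def[abs_def] by (rule Q.measurable_emeasure_Pair[OF E])
  define h where "h w = (if w [] then F w else 1)" for w
  have hm[measurable]: "h \<in> borel_measurable (BS p)"
    unfolding h_def[abs_def] by measurable
  define Cw where "Cw w j = (if w [j] then Pair (sh j w) -` E else UNIV)" for w j
  have Cwm: "Cw w j \<in> sets (BS q)" for w j
    using sets.top[of "BS q :: ('a list \<Rightarrow> bool) measure"] by (simp add: Cw_def)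
  have fib: "Pair w -` E' = {e. \<forall>j\<in>L. sh j e \<in> Cw w j}" for w
    by (auto simp: E'_def Cw_def)
  have fibm: "emeasure (BS q) (Pair w -` E') = (\<Prod>j\<in>L. h (sh j w))" for w
  proof -
    have "emeasure (BS q) (Pair w -` E') = (\<Prod>j\<in>L. emeasure (BS q) (Cw w j))"
      unfolding fib by (rule BI_set[OF L Cwm])
    also have "\<dots> = (\<Prod>j\<in>L. h (sh j w))"
    proof (intro prod.cong refl)
      fix j
      show "emeasure (BS q) (Cw w j) = h (sh j w)"
        using Q.emeasure_space_1 by (simp add: Cw_def h_def F_def sh_def)
    qed
    finally show ?thesis .
  qed
  have Finv: "F (w(Nil := c)) = F w" for w c
    unfolding F_def by (rule arg_cong[where f="emeasure (BS q)"]) (auto simp: inv)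
  have notroot: "emeasure (BS p :: ('a list \<Rightarrow> bool) measure) {w. \<not> w []} = ennreal (1 - p)"
  proof -
    interpret PP: product_prob_space "\<lambda>_. measure_pmf (bernoulli_pmf p)" "UNIV :: 'a list set"
      by unfold_locales
    have "emeasure (BS p :: ('a list \<Rightarrow> bool) measure) {w. \<not> w []} = emeasure (PiM UNIV (\<lambda>_::'a list. measure_pmf (bernoulli_pmf p)))
        {x \<in> space (PiM UNIV (\<lambda>_::'a list. measure_pmf (bernoulli_pmf p))). x [] \<in> {False}}"
      by (simp add: BS_def space_PiM)
    also have "\<dots> = emeasure (measure_pmf (bernoulli_pmf p)) {False}"
      by (rule PP.emeasure_PiM_Collect_single) auto
    also have "\<dots> = ennreal (1 - p)"
      using p by (simp add: emeasure_pmf_single)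
    finally show ?thesis .
  qed
  have hsplit: "h w = indicator {w. \<not> w []} w + indicator {w. w []} w * F w" for w
    by (simp add: h_def indicator_def)
  have inth: "(\<integral>\<^sup>+w. h w \<partial>(BS p :: ('a list \<Rightarrow> bool) measure)) = ennreal (1 - p) + ennreal p * emeasure (BS p \<Otimes>\<^sub>M BS q) E"
  proof -
    have "(\<integral>\<^sup>+w. h w \<partial>(BS p :: ('a list \<Rightarrow> bool) measure)) = (\<integral>\<^sup>+w. indicator {w. \<not> w []} w \<partial>(BS p :: ('a list \<Rightarrow> bool) measure)) + (\<integral>\<^sup>+w. indicator {w. w []} w * F w \<partial>(BS p :: ('a list \<Rightarrow> bool) measure))"
      unfolding hsplit by (rule nn_integral_add) measurable
    also have "(\<integral>\<^sup>+w. indicator {w. \<not> w []} w \<partial>(BS p :: ('a list \<Rightarrow> bool) measure)) = ennreal (1 - p)"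
      using notroot by (subst nn_integral_indicator) (simp_all add: coord_sets)
    also have "(\<integral>\<^sup>+w. indicator {w. w []} w * F w \<partial>(BS p :: ('a list \<Rightarrow> bool) measure)) = ennreal p * (\<integral>\<^sup>+w. F w \<partial>(BS p :: ('a list \<Rightarrow> bool) measure))"
      by (rule root_indep[OF p Fm Finv])
    also have "(\<integral>\<^sup>+w. F w \<partial>(BS p :: ('a list \<Rightarrow> bool) measure)) = emeasure (BS p \<Otimes>\<^sub>M BS q) E"
      unfolding F_def by (rule Q.emeasure_pair_measure_alt[symmetric, OF E])
    finally show ?thesis .
  qed
  have "emeasure (BS p \<Otimes>\<^sub>M BS q) E' = (\<integral>\<^sup>+w. emeasure (BS q) (Pair w -` E') \<partial>BS p)"
    by (rule Q.emeasure_pair_measure_alt[OF E'm])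
  also have "\<dots> = (\<integral>\<^sup>+w. (\<Prod>j\<in>L. h (sh j w)) \<partial>BS p)"
    by (simp add: fibm)
  also have "\<dots> = (\<Prod>j\<in>L. \<integral>\<^sup>+w. h w \<partial>BS p)"
    by (rule BI[OF L]) simp
  also have "\<dots> = (ennreal (1 - p) + ennreal p * emeasure (BS p \<Otimes>\<^sub>M BS q) E) ^ card L"
    by (simp add: inth)
  finally show "emeasure (BS p \<Otimes>\<^sub>M BS q) {z. \<forall>j\<in>L. fst z [j] \<longrightarrow> (sh j (fst z), sh j (snd z)) \<in> E}
          = (ennreal (1 - p) + ennreal p * emeasure (BS p \<Otimes>\<^sub>M BS q) E) ^ card L"
    by (simp add: E'_def)
qed


section \<open>Combinatorics of generations\<close>

lemma words_Suc_Cons: "(j # v \<in> words b d (Suc n)) \<longleftrightarrow> j \<in> alphabet b d \<and> v \<in> words b d n"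
  by (auto simp: words_def)

lemma words_0: "words b d 0 = {[]}"
  by (auto simp: words_def)

lemma gen_char: "w \<in> gw_gen b d \<omega> n \<longleftrightarrow> w \<in> words b d n \<and> (\<forall>i\<in>{1..n}. \<omega> (take i w))"
proof (induction n arbitrary: w)
  case 0
  then show ?case by (auto simp: words_def)
next
  case (Suc n)
  show ?case
  proof
    assume "w \<in> gw_gen b d \<omega> (Suc n)"
    then obtain a j where w: "w = a @ [j]" and a: "a \<in> gw_gen b d \<omega> n" and j: "j \<in> alphabet b d"
      and om: "\<omega> (a @ [j])" by auto
    from a Suc.IH have aw: "a \<in> words b d n" and ai: "\<forall>i\<in>{1..n}. \<omega> (take i a)" by auto
    have len: "length a = n" using aw by (simp add: words_def)
    have "w \<in> words b d (Suc n)" using aw j w by (auto simp: words_def)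
    moreover have "\<forall>i\<in>{1..Suc n}. \<omega> (take i w)"
    proof
      fix i assume i: "i \<in> {1..Suc n}"
      show "\<omega> (take i w)"
      proof (cases "i = Suc n")
        case True then show ?thesis using om w len by simp
      next
        case False
        then have "i \<in> {1..n}" using i by auto
        then show ?thesis using ai w len by simp
      qed
    qed
    ultimately show "w \<in> words b d (Suc n) \<and> (\<forall>i\<in>{1..Suc n}. \<omega> (take i w))" by blast
  next
    assume H: "w \<in> words b d (Suc n) \<and> (\<forall>i\<in>{1..Suc n}. \<omega> (take i w))"
    then have len: "length w = Suc n" and sw: "set w \<subseteq> alphabet b d" by (auto simp: words_def)
    then have wne: "w \<noteq> []" by auto
    define a where "a = butlast w"
    define j where "j = last w"
    have w: "w = a @ [j]" using wne by (simp add: a_def j_def)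
    have la: "length a = n" using len by (simp add: a_def)
    have aw: "a \<in> words b d n" using la sw w by (auto simp: words_def)
    have "\<forall>i\<in>{1..n}. \<omega> (take i a)"
    proof
      fix i assume i: "i \<in> {1..n}"
      then have "\<omega> (take i w)" using H by auto
      then show "\<omega> (take i a)" using i w la by simp
    qed
    with aw Suc.IH have a: "a \<in> gw_gen b d \<omega> n" by blast
    have j: "j \<in> alphabet b d" using sw w by auto
    have "\<omega> (take (Suc n) w)" using H by auto
    then have "\<omega> (a @ [j])" using len w by simp
    with a j w show "w \<in> gw_gen b d \<omega> (Suc n)" by auto
  qed
qed

lemma gen_words: "gw_gen b d \<omega> n \<subseteq> words b d n"
  using gen_char by blast

lemma gen_cons: "(j # v \<in> gw_gen b d \<omega> (Suc n)) \<longleftrightarrow> (j \<in> alphabet b d \<and> \<omega> [j] \<and> v \<in> gw_gen b d (sh j \<omega>) n)"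
proof -
  have "(\<forall>i\<in>{1..Suc n}. \<omega> (take i (j # v))) \<longleftrightarrow> \<omega> [j] \<and> (\<forall>i\<in>{1..n}. sh j \<omega> (take i v))"
  proof
    assume H: "\<forall>i\<in>{1..Suc n}. \<omega> (take i (j # v))"
    have "\<omega> [j]" using H[rule_format, of 1] by simp
    moreover have "\<forall>i\<in>{1..n}. sh j \<omega> (take i v)"
    proof
      fix i assume "i \<in> {1..n}"
      then have "Suc i \<in> {1..Suc n}" by auto
      then show "sh j \<omega> (take i v)" using H[rule_format, of "Suc i"] by (simp add: sh_def)
    qed
    ultimately show "\<omega> [j] \<and> (\<forall>i\<in>{1..n}. sh j \<omega> (take i v))" ..
  next
    assume H: "\<omega> [j] \<and> (\<forall>i\<in>{1..n}. sh j \<omega> (take i v))"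
    show "\<forall>i\<in>{1..Suc n}. \<omega> (take i (j # v))"
    proof
      fix i assume i: "i \<in> {1..Suc n}"
      then obtain k where k: "i = Suc k" by (cases i) auto
      show "\<omega> (take i (j # v))"
      proof (cases k)
        case 0 then show ?thesis using H k by simp
      next
        case (Suc k')
        then have "k \<in> {1..n}" using i k by auto
        then show ?thesis using H k by (auto simp: sh_def)
      qed
    qed
  qed
  then show ?thesis
    unfolding gen_char words_Suc_Cons by blast
qed

lemma gen_nil: "[] \<notin> gw_gen b d \<omega> (Suc n)"
  by (simp add: gen_char words_def)

lemma gen_upd: "gw_gen b d (x(Nil := c)) n = gw_gen b d x n"
proof (rule set_eqI)
  fix w
  have *: "(\<forall>i\<in>{1..n}. (x(Nil := c)) (take i w)) = (\<forall>i\<in>{1..n}. x (take i w))" if "w \<in> words b d n"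
    using that by (auto simp: words_def)
  show "w \<in> gw_gen b d (x(Nil := c)) n \<longleftrightarrow> w \<in> gw_gen b d x n"
    unfolding gen_char using * by blast
qed

lemma ext_rec: "(gw_gen b d \<omega> (Suc n) = {}) \<longleftrightarrow> (\<forall>j\<in>alphabet b d. \<omega> [j] \<longrightarrow> gw_gen b d (sh j \<omega>) n = {})"
proof
  assume H: "gw_gen b d \<omega> (Suc n) = {}"
  show "\<forall>j\<in>alphabet b d. \<omega> [j] \<longrightarrow> gw_gen b d (sh j \<omega>) n = {}"
  proof (intro ballI impI)
    fix j assume "j \<in> alphabet b d" "\<omega> [j]"
    then have "v \<notin> gw_gen b d (sh j \<omega>) n" for v
      using H gen_cons[of j v b d \<omega> n] by auto
    then show "gw_gen b d (sh j \<omega>) n = {}" by auto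
  qed
next
  assume H: "\<forall>j\<in>alphabet b d. \<omega> [j] \<longrightarrow> gw_gen b d (sh j \<omega>) n = {}"
  show "gw_gen b d \<omega> (Suc n) = {}"
  proof (rule ccontr)
    assume "gw_gen b d \<omega> (Suc n) \<noteq> {}"
    then obtain w where w: "w \<in> gw_gen b d \<omega> (Suc n)" by auto
    then obtain j v where jv: "w = j # v" using gen_nil by (cases w) auto
    have "j # v \<in> gw_gen b d \<omega> (Suc n)" using w by (simp only: jv)
    then have "j \<in> alphabet b d \<and> \<omega> [j] \<and> v \<in> gw_gen b d (sh j \<omega>) n" by (simp only: gen_cons)
    with H show False by auto
  qed
qed


declare gw_gen.simps(2)[simp del]

lemma finite_alphabet: "finite (alphabet b d)"
proof -
  have "alphabet b d = {xs. set xs \<subseteq> {..<b} \<and> length xs = d}" by (auto simp: alphabet_def)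
  then show ?thesis by (simp add: finite_lists_length_eq)
qed

lemma card_alphabet: "card (alphabet b d) = b ^ d"
proof -
  have "alphabet b d = {xs. set xs \<subseteq> {..<b} \<and> length xs = d}" by (auto simp: alphabet_def)
  then show ?thesis by (simp add: card_lists_length_eq)
qed

lemma finite_words: "finite (words b d n)"
proof -
  have "words b d n = {xs. set xs \<subseteq> alphabet b d \<and> length xs = n}" by (auto simp: words_def)
  then show ?thesis by (simp add: finite_lists_length_eq finite_alphabet)
qed

lemma alphabet_ne: "1 \<le> b \<Longrightarrow> replicate d 0 \<in> alphabet b d"
  by (auto simp: alphabet_def)

lemma words2_ne: "1 \<le> b \<Longrightarrow> [replicate d 0, replicate d 0] \<in> words b d 2"
  using alphabet_ne[of b d] by (auto simp: words_def)

definition Xs :: "nat \<Rightarrow> nat \<Rightarrow> nat \<Rightarrow> (nat list list \<Rightarrow> bool) \<Rightarrow> (nat list list \<Rightarrow> bool) \<Rightarrow> nat list list set" where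
  "Xs b d k \<omega> \<eta> = gw_gen b d \<omega> k \<inter> Yset b d k \<eta>"

lemma X_cons: "(j # v \<in> Xs b d (Suc k) \<omega> \<eta>) \<longleftrightarrow> (j \<in> alphabet b d \<and> \<omega> [j] \<and> v \<in> Xs b d k (sh j \<omega>) (sh j \<eta>))"
  unfolding Xs_def Yset_def by (auto simp: gen_cons words_Suc_Cons sh_def)

lemma X_words: "Xs b d k \<omega> \<eta> \<subseteq> words b d k"
  unfolding Xs_def Yset_def by auto

lemma Dfam_iff: "X \<in> Dfam b d m \<longleftrightarrow> X \<subseteq> words b d m \<and> (\<exists>a\<in>words b d (m - 2). \<forall>v\<in>words b d 2. a @ v \<in> X)"
  unfolding Dfam_def by blast

lemma D_rec:
  assumes k: "2 \<le> k" and b: "1 \<le> b"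
  shows "(Xs b d (Suc k) \<omega> \<eta> \<in> Dfam b d (Suc k)) \<longleftrightarrow> (\<exists>j\<in>alphabet b d. \<omega> [j] \<and> Xs b d k (sh j \<omega>) (sh j \<eta>) \<in> Dfam b d k)"
proof
  have km: "Suc k - 2 = Suc (k - 2)" using k by simp
  assume "Xs b d (Suc k) \<omega> \<eta> \<in> Dfam b d (Suc k)"
  then obtain a where a: "a \<in> words b d (Suc (k - 2))" and av: "\<forall>v\<in>words b d 2. a @ v \<in> Xs b d (Suc k) \<omega> \<eta>"
    unfolding Dfam_iff km by blast
  obtain j a' where ja: "a = j # a'" using a by (cases a) (auto simp: words_def)
  have j: "j \<in> alphabet b d" and a': "a' \<in> words b d (k - 2)" using a ja words_Suc_Cons by auto
  have H: "\<omega> [j] \<and> a' @ v \<in> Xs b d k (sh j \<omega>) (sh j \<eta>)" if "v \<in> words b d 2" for v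
    using av that X_cons[where j=j and v="a' @ v" and k=k and \<omega>=\<omega> and \<eta>=\<eta>] ja by auto
  have "\<omega> [j]" using H[OF words2_ne[OF b]] by blast
  moreover have "Xs b d k (sh j \<omega>) (sh j \<eta>) \<in> Dfam b d k"
    unfolding Dfam_iff using X_words a' H by blast
  ultimately show "\<exists>j\<in>alphabet b d. \<omega> [j] \<and> Xs b d k (sh j \<omega>) (sh j \<eta>) \<in> Dfam b d k"
    using j by blast
next
  have km: "Suc k - 2 = Suc (k - 2)" using k by simp
  assume "\<exists>j\<in>alphabet b d. \<omega> [j] \<and> Xs b d k (sh j \<omega>) (sh j \<eta>) \<in> Dfam b d k"
  then obtain j a' where j: "j \<in> alphabet b d" and oj: "\<omega> [j]" and a': "a' \<in> words b d (k - 2)"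
    and av: "\<forall>v\<in>words b d 2. a' @ v \<in> Xs b d k (sh j \<omega>) (sh j \<eta>)"
    unfolding Dfam_iff by blast
  have "j # a' \<in> words b d (Suc k - 2)" using j a' km words_Suc_Cons by simp
  moreover have "\<forall>v\<in>words b d 2. (j # a') @ v \<in> Xs b d (Suc k) \<omega> \<eta>"
    using av j oj X_cons by simp
  ultimately show "Xs b d (Suc k) \<omega> \<eta> \<in> Dfam b d (Suc k)"
    unfolding Dfam_iff using X_words by blast
qed

definition Eset :: "nat \<Rightarrow> nat \<Rightarrow> nat \<Rightarrow> ((nat list list \<Rightarrow> bool) \<times> (nat list list \<Rightarrow> bool)) set" where
  "Eset b d k = {(\<omega>, \<eta>). Xs b d k \<omega> \<eta> \<notin> Dfam b d k}"

lemma E_rec: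
  assumes "2 \<le> k" "1 \<le> b"
  shows "Eset b d (Suc k) = {z. \<forall>j\<in>alphabet b d. fst z [j] \<longrightarrow> (sh j (fst z), sh j (snd z)) \<in> Eset b d k}"
proof (rule set_eqI)
  fix z :: "(nat list list \<Rightarrow> bool) \<times> (nat list list \<Rightarrow> bool)"
  obtain \<omega> \<eta> where z: "z = (\<omega>, \<eta>)" by (cases z)
  show "z \<in> Eset b d (Suc k) \<longleftrightarrow> z \<in> {z. \<forall>j\<in>alphabet b d. fst z [j] \<longrightarrow> (sh j (fst z), sh j (snd z)) \<in> Eset b d k}"
    unfolding z Eset_def using D_rec[OF assms, where \<omega>=\<omega> and \<eta>=\<eta> and d=d] by auto
qed

lemma E_inv: "((x(Nil := c), e) \<in> Eset b d k) = ((x, e) \<in> Eset b d k)"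
  by (simp add: Eset_def Xs_def gen_upd)

lemma E2:
  "Eset b d 2 = UNIV - ({\<omega>. \<forall>w\<in>take 1 ` words b d 2 \<union> words b d 2. \<omega> w} \<times> {\<eta>. \<forall>w\<in>words b d 2. \<eta> w})"
proof (rule set_eqI)
  fix z :: "(nat list list \<Rightarrow> bool) \<times> (nat list list \<Rightarrow> bool)"
  obtain \<omega> \<eta> where z: "z = (\<omega>, \<eta>)" by (cases z)
  have w0: "words b d (2 - 2) = {[]}" by (simp add: words_0)
  have "Xs b d 2 \<omega> \<eta> \<in> Dfam b d 2 \<longleftrightarrow> (\<forall>v\<in>words b d 2. v \<in> Xs b d 2 \<omega> \<eta>)"
    unfolding Dfam_iff w0 using X_words by auto
  also have "\<dots> \<longleftrightarrow> (\<forall>v\<in>words b d 2. \<omega> (take 1 v) \<and> \<omega> v \<and> \<eta> v)"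
  proof -
    have "v \<in> Xs b d 2 \<omega> \<eta> \<longleftrightarrow> \<omega> (take 1 v) \<and> \<omega> v \<and> \<eta> v" if v: "v \<in> words b d 2" for v
    proof -
      have lv: "length v = 2" using v by (simp add: words_def)
      have "{1..2::nat} = {1, 2}" by auto
      then show ?thesis using v lv by (auto simp: Xs_def Yset_def gen_char)
    qed
    then show ?thesis by auto
  qed
  also have "\<dots> \<longleftrightarrow> (\<forall>w\<in>take 1 ` words b d 2 \<union> words b d 2. \<omega> w) \<and> (\<forall>w\<in>words b d 2. \<eta> w)"
    by auto
  finally show "z \<in> Eset b d 2 \<longleftrightarrow> z \<in> UNIV - ({\<omega>. \<forall>w\<in>take 1 ` words b d 2 \<union> words b d 2. \<omega> w} \<times> {\<eta>. \<forall>w\<in>words b d 2. \<eta> w})"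
    unfolding z Eset_def by auto
qed

lemma cyl_sets: "finite W \<Longrightarrow> {\<omega>. \<forall>w\<in>W. \<omega> w} \<in> sets (BS q)"
proof -
  assume W: "finite W"
  have "Measurable.pred (BS q) (\<lambda>\<omega>. \<forall>w\<in>W. \<omega> w)" using W by measurable
  then show ?thesis by (simp add: pred_def)
qed

lemma cyl_emeasure:
  assumes W: "finite W" and q: "0 \<le> q" "q \<le> 1"
  shows "emeasure (BS q :: ('a list \<Rightarrow> bool) measure) {\<omega>. \<forall>w\<in>W. \<omega> w} = ennreal q ^ card W"
proof -
  interpret PP: product_prob_space "\<lambda>_. measure_pmf (bernoulli_pmf q)" "UNIV :: 'a list set"
    by unfold_locales
  have "emeasure (BS q :: ('a list \<Rightarrow> bool) measure) {\<omega>. \<forall>w\<in>W. \<omega> w} =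
    emeasure (PiM UNIV (\<lambda>_::'a list. measure_pmf (bernoulli_pmf q)))
      {x \<in> space (PiM UNIV (\<lambda>_::'a list. measure_pmf (bernoulli_pmf q))). \<forall>i\<in>W. x i \<in> {True}}"
    by (simp add: BS_def space_PiM)
  also have "\<dots> = (\<Prod>i\<in>W. emeasure (measure_pmf (bernoulli_pmf q)) {True})"
    by (rule PP.emeasure_PiM_Collect) (auto simp: W)
  also have "\<dots> = ennreal q ^ card W"
    using q by (simp add: emeasure_pmf_single)
  finally show ?thesis .
qed



lemma iter_lim:
  fixes p :: real and B :: nat and x0 :: real
  assumes p: "0 < p" "p \<le> 1" and sup: "p * real B > 1" and x0: "0 \<le> x0" "x0 < 1"
  shows "\<exists>\<rho>. (\<lambda>n. ((\<lambda>x. (1 - p + p * x) ^ B) ^^ n) 0) \<longlonglongrightarrow> \<rho> \<and>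
             (\<lambda>n. ((\<lambda>x. (1 - p + p * x) ^ B) ^^ n) x0) \<longlonglongrightarrow> \<rho>"
proof -
  define \<phi> where "\<phi> = (\<lambda>x::real. (1 - p + p * x) ^ B)"
  define \<phi>' where "\<phi>' = (\<lambda>x::real. real B * (1 - p + p * x) ^ (B - 1) * p)"
  define h where "h = (\<lambda>x. \<phi> x - x)"
  have B2: "B \<ge> 2"
  proof (rule ccontr)
    assume "\<not> B \<ge> 2"
    then have "real B \<le> 1" by simp
    then have "p * real B \<le> 1" using p by (metis mult_le_one of_nat_0_le_iff less_le_not_le)
    with sup show False by simp
  qed
  have base: "0 \<le> 1 - p + p * x" if "0 \<le> x" for x
    using p that by (smt (verit) mult_nonneg_nonneg)
  have mono: "\<phi> x \<le> \<phi> y" if "0 \<le> x" "x \<le> y" for x y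
    unfolding \<phi>_def using p that base by (intro power_mono) (auto intro: mult_left_mono)
  have rng: "0 \<le> \<phi> x \<and> \<phi> x \<le> 1" if "0 \<le> x" "x \<le> 1" for x
  proof -
    have "1 - p + p * x \<le> 1" using p that by (smt (verit) mult_left_le)
    then show ?thesis unfolding \<phi>_def using base[OF that(1)] by (simp add: power_le_one)
  qed
  have phi1: "\<phi> 1 = 1" by (simp add: \<phi>_def)
  have cont: "isCont \<phi> x" for x unfolding \<phi>_def by (intro continuous_intros)
  have conth: "continuous_on S h" for S unfolding h_def \<phi>_def by (intro continuous_intros)
  have dphi: "(\<phi> has_real_derivative \<phi>' x) (at x)" for x
    unfolding \<phi>_def \<phi>'_def by (auto intro!: derivative_eq_intros)
  have dh: "(h has_real_derivative (\<phi>' x - 1)) (at x)" for x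
    unfolding h_def by (intro derivative_intros dphi)
  have dmono: "\<phi>' x < \<phi>' y" if "0 \<le> x" "x < y" for x y
  proof -
    have "(1 - p + p * x) ^ (B - 1) < (1 - p + p * y) ^ (B - 1)"
      using B2 p that base[OF that(1)] by (intro power_strict_mono) auto
    then show ?thesis unfolding \<phi>'_def using p B2 by simp
  qed
  define u where "u n = (\<phi> ^^ n) 0" for n
  have u_rng: "0 \<le> u n \<and> u n \<le> 1" for n
    by (induction n) (auto simp: u_def rng)
  have u_inc: "u n \<le> u (Suc n)" for n
  proof (induction n)
    case 0 then show ?case using rng[of 0] by (simp add: u_def)
  next
    case (Suc n)
    then show ?case using mono[of "u n" "u (Suc n)"] u_rng[of n] by (simp add: u_def)
  qed
  obtain \<rho> where u_lim: "u \<longlonglongrightarrow> \<rho>" and u_le: "\<forall>i. u i \<le> \<rho>"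
    using incseq_convergent[of u 1] u_inc u_rng by (auto simp: incseq_Suc_iff)
  have rho_rng: "0 \<le> \<rho>" "\<rho> \<le> 1"
  proof -
    show "0 \<le> \<rho>" using u_le[rule_format, of 0] u_rng[of 0] by linarith
    show "\<rho> \<le> 1" using LIMSEQ_le_const2[OF u_lim] u_rng by blast
  qed
  have "(\<lambda>n. \<phi> (u n)) \<longlonglongrightarrow> \<phi> \<rho>" using u_lim cont isCont_tendsto_compose by blast
  moreover have "(\<lambda>n. \<phi> (u n)) = (\<lambda>n. u (Suc n))" by (simp add: u_def fun_eq_iff)
  ultimately have "(\<lambda>n. u (Suc n)) \<longlonglongrightarrow> \<phi> \<rho>" by simp
  then have fix_rho: "\<phi> \<rho> = \<rho>" using u_lim LIMSEQ_Suc LIMSEQ_unique by blast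
  have least: "\<rho> \<le> c" if "0 \<le> c" "\<phi> c = c" for c
  proof -
    have "u n \<le> c" for n
    proof (induction n)
      case 0 then show ?case using that by (simp add: u_def)
    next
      case (Suc n)
      then show ?case using mono[of "u n" c] u_rng[of n] that by (simp add: u_def)
    qed
    then show ?thesis using LIMSEQ_le_const2[OF u_lim] by blast
  qed
  have "\<phi>' 1 - 1 > 0" unfolding \<phi>'_def using sup by (simp add: mult.commute)
  then obtain dd where dd: "dd > 0" "\<And>t. t > 0 \<Longrightarrow> t < dd \<Longrightarrow> h (1 - t) < h 1"
    using DERIV_pos_inc_left[OF dh[of 1]] by blast
  have h1: "h 1 = 0" by (simp add: h_def phi1)
  have near1: "\<exists>y. x < y \<and> y < 1 \<and> h y < 0" if xl: "x < (1::real)" for x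
  proof -
    define t where "t = min (dd / 2) ((1 - x) / 2)"
    have t0: "t > 0" "t < dd" using dd xl by (auto simp: t_def)
    then have "h (1 - t) < 0" using dd h1 by auto
    moreover have tb: "t \<le> (1 - x) / 2" unfolding t_def by (rule min.cobounded2)
    have "x < 1 - t" using tb xl by (simp add: field_simps)
    moreover have "1 - t < 1" using t0 by simp
    ultimately show ?thesis by blast
  qed
  obtain y0 where y0: "0 < y0" "y0 < 1" "h y0 < 0" using near1[of 0] by auto
  have "h y0 \<le> 0" "0 \<le> h 0" using y0 rng[of 0] by (auto simp: h_def)
  then obtain c where c: "0 \<le> c" "c \<le> y0" "h c = 0"
    using IVT2'[of h y0 0 0] y0 conth by auto
  have rho_lt1: "\<rho> < 1" using least[of c] c y0 by (auto simp: h_def)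
  have nofix: "h z \<noteq> 0" if zr: "\<rho> < z" "z < 1" for z
  proof
    assume hz: "h z = 0"
    have hr: "h \<rho> = 0" using fix_rho by (simp add: h_def)
    have dif: "h differentiable (at x)" for x using dh real_differentiable_def by blast
    obtain x1 where x1: "\<rho> < x1" "x1 < z" "DERIV h x1 :> 0"
      using Rolle[of \<rho> z h] zr hz hr conth dif by auto
    obtain x2 where x2: "z < x2" "x2 < 1" "DERIV h x2 :> 0"
      using Rolle[of z 1 h] zr hz h1 conth dif by auto
    have "\<phi>' x1 - 1 = 0" using DERIV_unique[OF dh x1(3)] .
    moreover have "\<phi>' x2 - 1 = 0" using DERIV_unique[OF dh x2(3)] .
    moreover have "\<phi>' x1 < \<phi>' x2" using dmono[of x1 x2] x1 x2 rho_rng by auto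
    ultimately show False by simp
  qed
  have hneg: "h x < 0" if xr: "\<rho> < x" "x < 1" for x
  proof (rule ccontr)
    assume "\<not> h x < 0"
    then have hx: "0 \<le> h x" by simp
    obtain y where y: "x < y" "y < 1" "h y < 0" using near1[OF xr(2)] by auto
    obtain z where z: "x \<le> z" "z \<le> y" "h z = 0"
      using IVT2'[of h y 0 x] hx y conth by auto
    then show False using nofix[of z] xr y by auto
  qed
  define v where "v n = (\<phi> ^^ n) x0" for n
  have "v \<longlonglongrightarrow> \<rho>"
  proof (cases "x0 \<le> \<rho>")
    case True
    have bnd: "u n \<le> v n \<and> v n \<le> \<rho>" for n
    proof (induction n)
      case 0 then show ?case using True x0 by (simp add: u_def v_def)
    next
      case (Suc n)
      have "u n \<ge> 0" using u_rng by simp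
      then have "\<phi> (u n) \<le> \<phi> (v n)" "\<phi> (v n) \<le> \<phi> \<rho>" using Suc mono by auto
      then show ?case using fix_rho by (simp add: u_def v_def)
    qed
    show ?thesis
      by (rule tendsto_sandwich[OF _ _ u_lim tendsto_const]) (auto simp: bnd)
  next
    case False
    have inv: "\<rho> \<le> v n \<and> v n \<le> x0 \<and> v (Suc n) \<le> v n" for n
    proof (induction n)
      case 0
      have "\<phi> x0 \<le> x0"
        using hneg[of x0] False x0 by (simp add: h_def)
      then show ?case using False by (simp add: v_def)
    next
      case (Suc n)
      have r1: "\<rho> \<le> v (Suc n)"
        using mono[of \<rho> "v n"] Suc rho_rng fix_rho by (simp add: v_def)
      have r2: "v (Suc n) \<le> x0" using Suc by simp
      have "\<phi> (v (Suc n)) \<le> v (Suc n)"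
      proof (cases "v (Suc n) = \<rho>")
        case True then show ?thesis using fix_rho by simp
      next
        case False
        then have "h (v (Suc n)) < 0" using hneg[of "v (Suc n)"] r1 r2 x0 by auto
        then show ?thesis by (simp add: h_def)
      qed
      then show ?case using r1 r2 by (simp add: v_def)
    qed
    obtain L where vL: "v \<longlonglongrightarrow> L" and Lle: "\<forall>i. L \<le> v i"
      using decseq_convergent[of v \<rho>] inv by (auto simp: decseq_Suc_iff)
    have Lge: "\<rho> \<le> L" using LIMSEQ_le_const[OF vL] inv by blast
    have Lx0: "L \<le> x0" using Lle[rule_format, of 0] by (simp add: v_def)
    have "(\<lambda>n. \<phi> (v n)) \<longlonglongrightarrow> \<phi> L" using vL cont isCont_tendsto_compose by blast
    moreover have "(\<lambda>n. \<phi> (v n)) = (\<lambda>n. v (Suc n))" by (simp add: v_def fun_eq_iff)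
    ultimately have "(\<lambda>n. v (Suc n)) \<longlonglongrightarrow> \<phi> L" by simp
    then have "\<phi> L = L" using vL LIMSEQ_Suc LIMSEQ_unique by blast
    then have "L = \<rho>" using nofix[of L] Lge Lx0 x0 by (force simp: h_def)
    then show ?thesis using vL by simp
  qed
  then show ?thesis using u_lim unfolding u_def v_def \<phi>_def by blast
qed



lemma REC_real:
  fixes L :: "'a set" and E :: "(('a list \<Rightarrow> bool) \<times> ('a list \<Rightarrow> bool)) set"
  assumes L: "finite L" and p: "0 \<le> p" "p \<le> 1" and E: "E \<in> sets (BS p \<Otimes>\<^sub>M BS q)"
    and inv: "\<And>w e c. ((w(Nil := c), e) \<in> E) = ((w, e) \<in> E)"
  shows "{z. \<forall>j\<in>L. fst z [j] \<longrightarrow> (sh j (fst z), sh j (snd z)) \<in> E} \<in> sets (BS p \<Otimes>\<^sub>M BS q)"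
    and "measure (BS p \<Otimes>\<^sub>M BS q) {z. \<forall>j\<in>L. fst z [j] \<longrightarrow> (sh j (fst z), sh j (snd z)) \<in> E}
          = (1 - p + p * measure (BS p \<Otimes>\<^sub>M BS q) E) ^ card L"
proof -
  interpret PQ: prob_space "BS p \<Otimes>\<^sub>M BS q :: (('a list \<Rightarrow> bool) \<times> ('a list \<Rightarrow> bool)) measure"
    by (intro prob_space_pair prob_space_BS)
  show "{z. \<forall>j\<in>L. fst z [j] \<longrightarrow> (sh j (fst z), sh j (snd z)) \<in> E} \<in> sets (BS p \<Otimes>\<^sub>M BS q)"
    by (rule REC(1)[OF L p E inv])
  define m where "m = measure (BS p \<Otimes>\<^sub>M BS q) E"
  define E' where "E' = {z. \<forall>j\<in>L. fst z [j] \<longrightarrow> (sh j (fst z), sh j (snd z)) \<in> E}"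
  have m0: "0 \<le> m" by (simp add: m_def)
  have b0: "0 \<le> 1 - p + p * m" using p m0 by simp
  have "ennreal (measure (BS p \<Otimes>\<^sub>M BS q) E') = emeasure (BS p \<Otimes>\<^sub>M BS q) E'"
    by (simp add: PQ.emeasure_eq_measure)
  also have "\<dots> = (ennreal (1 - p) + ennreal p * ennreal m) ^ card L"
    using REC(2)[OF L p E inv] by (simp add: E'_def m_def PQ.emeasure_eq_measure)
  also have "ennreal (1 - p) + ennreal p * ennreal m = ennreal (1 - p + p * m)"
    using p m0 by (simp add: ennreal_plus ennreal_mult)
  also have "ennreal (1 - p + p * m) ^ card L = ennreal ((1 - p + p * m) ^ card L)"
    using b0 by (simp add: ennreal_power)
  finally have "ennreal (measure (BS p \<Otimes>\<^sub>M BS q) E') = ennreal ((1 - p + p * m) ^ card L)" .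
  then show "measure (BS p \<Otimes>\<^sub>M BS q) {z. \<forall>j\<in>L. fst z [j] \<longrightarrow> (sh j (fst z), sh j (snd z)) \<in> E}
          = (1 - p + p * measure (BS p \<Otimes>\<^sub>M BS q) E) ^ card L"
    using b0 by (subst (asm) ennreal_inj) (simp_all add: E'_def m_def)
qed


theorem lemma4p7:
  fixes b d :: nat and p s :: real
  assumes "b \<ge> 2" and "d \<ge> 1"
    and "0 \<le> p" and "p \<le> 1"
    and "p * real b ^ d > 1"
    and "0 < s" and "s < 1"
  shows "(\<lambda>k. gD b d p k s) \<longlonglongrightarrow> extinction_prob b d p"
proof -
  note b2 = assms(1) and p0 = assms(3) and p1 = assms(4) and sup = assms(5) and s0 = assms(6) and s1 = assms(7)
  have b1: "1 \<le> b" using b2 by simp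
  have pp: "0 < p" using p0 sup by (cases "p = 0") auto
  have q0: "0 \<le> 1 - s" "1 - s \<le> 1" using s0 s1 by auto
  define L where "L = alphabet b d"
  have L: "finite L" by (simp add: L_def finite_alphabet)
  have cL: "card L = b ^ d" by (simp add: L_def card_alphabet)
  define PQ where "PQ = (BS p \<Otimes>\<^sub>M BS (1 - s) :: ((nat list list \<Rightarrow> bool) \<times> (nat list list \<Rightarrow> bool)) measure)"
  interpret PQ: prob_space PQ unfolding PQ_def by (intro prob_space_pair prob_space_BS)
  interpret P: prob_space "BS p :: (nat list list \<Rightarrow> bool) measure" by (rule prob_space_BS)
  interpret Q: prob_space "BS (1 - s) :: (nat list list \<Rightarrow> bool) measure" by (rule prob_space_BS)
  interpret PQ2: pair_prob_space "BS p :: (nat list list \<Rightarrow> bool) measure" "BS (1 - s) :: (nat list list \<Rightarrow> bool) measure" ..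
  define \<phi> where "\<phi> = (\<lambda>x::real. (1 - p + p * x) ^ (b ^ d))"
  have gw: "gw_space p = BS p" by (simp add: gw_space_def BS_def)
  have ys: "Y_space s = BS (1 - s)" by (simp add: Y_space_def BS_def)
  have spPQ: "space PQ = UNIV" by (simp add: PQ_def space_pair_measure)
  have gD_eq: "gD b d p k s = measure PQ (Eset b d k)" for k
    by (simp add: gD_def gw ys Eset_def Xs_def PQ_def)
  define W1 where "W1 = take 1 ` words b d 2 \<union> words b d 2"
  define A2 where "A2 = {\<omega>::nat list list \<Rightarrow> bool. \<forall>w\<in>W1. \<omega> w}"
  define B2 where "B2 = {\<eta>::nat list list \<Rightarrow> bool. \<forall>w\<in>words b d 2. \<eta> w}"
  have W1f: "finite W1" by (simp add: W1_def finite_words)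
  have A2m: "A2 \<in> sets (BS p)" unfolding A2_def by (rule cyl_sets[OF W1f])
  have B2m: "B2 \<in> sets (BS (1 - s))" unfolding B2_def by (rule cyl_sets[OF finite_words])
  have ABm: "A2 \<times> B2 \<in> sets PQ" unfolding PQ_def using A2m B2m by (rule pair_measureI)
  have E2eq: "Eset b d 2 = space PQ - A2 \<times> B2"
    using E2[of b d] by (simp add: spPQ A2_def B2_def W1_def)
  have E2m: "Eset b d 2 \<in> sets PQ" unfolding E2eq using ABm by auto
  have "emeasure PQ (A2 \<times> B2) = emeasure (BS p) A2 * emeasure (BS (1 - s)) B2"
    unfolding PQ_def using A2m B2m by (rule Q.emeasure_pair_measure_Times)
  also have "\<dots> = ennreal p ^ card W1 * ennreal (1 - s) ^ card (words b d 2)"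
    unfolding A2_def B2_def using cyl_emeasure[OF W1f p0 p1] cyl_emeasure[OF finite_words q0] by simp
  finally have "emeasure PQ (A2 \<times> B2) = ennreal p ^ card W1 * ennreal (1 - s) ^ card (words b d 2)" .
  moreover have "0 < ennreal p ^ card W1 * ennreal (1 - s) ^ card (words b d 2)"
  proof -
    have "ennreal p ^ card W1 * ennreal (1 - s) ^ card (words b d 2) = ennreal (p ^ card W1 * (1 - s) ^ card (words b d 2))"
      using pp s1 by (simp add: ennreal_power ennreal_mult)
    moreover have "0 < p ^ card W1 * (1 - s) ^ card (words b d 2)" using pp s1 by simp
    ultimately show ?thesis by simp
  qed
  ultimately have "0 < emeasure PQ (A2 \<times> B2)" by simp
  then have posAB: "0 < measure PQ (A2 \<times> B2)"
    by (simp add: PQ.emeasure_eq_measure)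
  have g2: "0 \<le> measure PQ (Eset b d 2)" "measure PQ (Eset b d 2) < 1"
    using PQ.prob_compl[OF ABm] posAB by (simp_all add: E2eq)
  have gDrec: "Eset b d (m + 2) \<in> sets PQ \<and> measure PQ (Eset b d (m + 2)) = (\<phi> ^^ m) (measure PQ (Eset b d 2))" for m
  proof (induction m)
    case 0 then show ?case using E2m by (metis add_0 funpow_0)
  next
    case (Suc m)
    have eq: "Eset b d (Suc m + 2) = {z. \<forall>j\<in>L. fst z [j] \<longrightarrow> (sh j (fst z), sh j (snd z)) \<in> Eset b d (m + 2)}"
      using E_rec[of "m + 2" b d] b1 by (simp add: L_def)
    have Em: "Eset b d (m + 2) \<in> sets (BS p \<Otimes>\<^sub>M BS (1 - s))" using Suc.IH by (simp add: PQ_def)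
    show ?case
      unfolding eq
      using REC_real[OF L p0 p1 Em E_inv] Suc.IH
      by (simp add: PQ_def \<phi>_def cL)
  qed
  define A where "A n = {\<omega>::nat list list \<Rightarrow> bool. gw_gen b d \<omega> n = {}}" for n
  have Apred: "Measurable.pred (BS p) (\<lambda>\<omega>::nat list list \<Rightarrow> bool. gw_gen b d \<omega> n = {})" for n
  proof (induction n)
    case 0 then show ?case by simp
  next
    case (Suc n)
    note Suc.IH[measurable]
    have "Measurable.pred (BS p) (\<lambda>\<omega>::nat list list \<Rightarrow> bool. \<forall>j\<in>alphabet b d. \<omega> [j] \<longrightarrow> gw_gen b d (sh j \<omega>) n = {})"
      using finite_alphabet by measurable
    then show ?case by (simp only: ext_rec)
  qed
  have Am: "A n \<in> sets (BS p)" for n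
    using Apred[of n] by (simp add: A_def pred_def)
  have Ainv: "((w(Nil := c), e) \<in> A n \<times> (UNIV :: (nat list list \<Rightarrow> bool) set)) = ((w, e) \<in> A n \<times> (UNIV :: (nat list list \<Rightarrow> bool) set))" for w e c n
    by (simp add: A_def gen_upd)
  have Arec: "A (Suc n) \<times> (UNIV :: (nat list list \<Rightarrow> bool) set) = {z. \<forall>j\<in>L. fst z [j] \<longrightarrow> (sh j (fst z), sh j (snd z)) \<in> A n \<times> (UNIV :: (nat list list \<Rightarrow> bool) set)}" for n
    by (auto simp: A_def L_def ext_rec)
  have Aprod: "measure PQ (A n \<times> (UNIV :: (nat list list \<Rightarrow> bool) set)) = measure (BS p) (A n)" for n
  proof -
    have U: "UNIV \<in> sets (BS (1 - s) :: (nat list list \<Rightarrow> bool) measure)"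
      using sets.top[of "BS (1 - s) :: (nat list list \<Rightarrow> bool) measure"] by simp
    have U1: "emeasure (BS (1 - s) :: (nat list list \<Rightarrow> bool) measure) UNIV = 1"
      using Q.emeasure_space_1 by simp
    have "emeasure PQ (A n \<times> (UNIV :: (nat list list \<Rightarrow> bool) set)) = emeasure (BS p) (A n) * emeasure (BS (1 - s) :: (nat list list \<Rightarrow> bool) measure) UNIV"
      unfolding PQ_def by (rule Q.emeasure_pair_measure_Times[OF Am U])
    then show ?thesis
      by (simp add: U1 PQ.emeasure_eq_measure P.emeasure_eq_measure)
  qed
  have Arec2: "A n \<times> (UNIV :: (nat list list \<Rightarrow> bool) set) \<in> sets PQ \<and> measure PQ (A n \<times> (UNIV :: (nat list list \<Rightarrow> bool) set)) = (\<phi> ^^ n) 0" for n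
  proof (induction n)
    case 0
    have "A 0 = {}" by (simp add: A_def)
    then show ?case by simp
  next
    case (Suc n)
    have Em: "A n \<times> (UNIV :: (nat list list \<Rightarrow> bool) set) \<in> sets (BS p \<Otimes>\<^sub>M BS (1 - s))" using Suc.IH by (simp add: PQ_def)
    show ?case
      unfolding Arec
      using REC_real[OF L p0 p1 Em Ainv] Suc.IH
      by (simp add: PQ_def \<phi>_def cL)
  qed
  have ext_eq: "extinction_prob b d p = measure (BS p) (\<Union>n. A n)"
  proof -
    have "{\<omega>. \<exists>n. gw_gen b d \<omega> n = {}} = (\<Union>n. A n)" by (auto simp: A_def)
    then show ?thesis by (simp add: extinction_prob_def gw)
  qed
  have Ainc: "incseq A"
  proof (rule incseq_SucI)
    fix n show "A n \<subseteq> A (Suc n)" by (auto simp: A_def gw_gen.simps(2))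
  qed
  have "(\<lambda>n. measure (BS p) (A n)) \<longlonglongrightarrow> measure (BS p) (\<Union>n. A n)"
    using Am Ainc by (intro P.finite_Lim_measure_incseq) auto
  then have lim0: "(\<lambda>n. (\<phi> ^^ n) 0) \<longlonglongrightarrow> extinction_prob b d p"
    using Arec2 Aprod ext_eq by simp
  have supB: "p * real (b ^ d) > 1" using sup by simp
  obtain \<rho> where r0: "(\<lambda>n. (\<phi> ^^ n) 0) \<longlonglongrightarrow> \<rho>"
      and rx: "(\<lambda>n. (\<phi> ^^ n) (measure PQ (Eset b d 2))) \<longlonglongrightarrow> \<rho>"
    using iter_lim[OF pp p1 supB g2] unfolding \<phi>_def by blast
  have "\<rho> = extinction_prob b d p" using r0 lim0 LIMSEQ_unique by blast
  then have "(\<lambda>m. gD b d p (m + 2) s) \<longlonglongrightarrow> extinction_prob b d p"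
    using rx gDrec by (simp add: gD_eq)
  then show ?thesis by (rule LIMSEQ_offset)
qed


end
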